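(* Let $q$ be an odd prime power. Then (i) $\prod\{a\in{\mathbb F}_q^\times: a \text{ and } 4-a \text{ are nonsquares in }{\mathbb F}_q\}=2$; (ii) $\prod\{a\in{\mathbb F}_q^\times: -a \text{ and } 4+a \text{ are nonsquares in }{\mathbb F}_q\}=2$ if $q\equiv\pm1\pmod 8$ and $=-2$ if $q\equiv\pm3\pmod 8$. *)

theory Defs
  imports Main
begin

text \<open>Squares in a field: a is a square iff a = x^2 for some x (so 0 is a square,
  and nonsquares are automatically nonzero).\<close>
definition is_square :: "'a::monoid_mult \<Rightarrow> bool" where
  "is_square a \<longleftrightarrow> (\<exists>x. a = x ^ 2)"

end

theory Submission
  imports Defs "HOL-Computational_Algebra.Polynomial" "HOL-Library.FuncSet"
begin


lemma prod_involution:
  fixes g :: "'b \<Rightarrow> 'c::comm_monoid_mult"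
  assumes "finite A" "\<forall>x\<in>A. f x \<in> A \<and> f (f x) = x"
    "\<forall>x\<in>A. f x \<noteq> x \<longrightarrow> g x * g (f x) = 1"
  shows "prod g A = prod g {x\<in>A. f x = x}"
  using assms
proof (induction "card A" arbitrary: A rule: less_induct)
  case (less A)
  show ?case
  proof (cases "\<forall>x\<in>A. f x = x")
    case True
    then have "{x\<in>A. f x = x} = A" by auto
    then show ?thesis by simp
  next
    case False
    then obtain x where x: "x \<in> A" "f x \<noteq> x" by auto
    define A' where "A' = A - {x, f x}"
    have fx: "f x \<in> A" "f (f x) = x" using less.prems x by auto
    have cl: "\<forall>y\<in>A'. f y \<in> A' \<and> f (f y) = y"
    proof
      fix y assume y: "y \<in> A'"
      then have yA: "y \<in> A" "y \<noteq> x" "y \<noteq> f x" unfolding A'_def by auto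
      have ff: "f (f y) = y" "f y \<in> A" using less.prems(2) yA(1) by auto
      have "f y \<noteq> x" using ff yA(3) by auto
      moreover have "f y \<noteq> f x" using ff yA(2) fx(2) by metis
      ultimately show "f y \<in> A' \<and> f (f y) = y" using ff unfolding A'_def by auto
    qed
    have fin: "finite A'" using less.prems unfolding A'_def by auto
    have cardlt: "card A' < card A" unfolding A'_def
      using x less.prems(1) by (intro psubset_card_mono) auto
    have IH: "prod g A' = prod g {y\<in>A'. f y = y}"
      by (rule less.hyps[OF cardlt fin cl]) (use less.prems(3) in \<open>auto simp: A'_def\<close>)
    have eq: "A = insert x (insert (f x) A')" using x fx unfolding A'_def by auto
    have n1: "x \<notin> insert (f x) A'" "f x \<notin> A'" using x unfolding A'_def by auto
    have "prod g (insert x (insert (f x) A')) = g x * (g (f x) * prod g A')"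
      using fin n1 by simp
    then have "prod g A = g x * g (f x) * prod g A'"
      using eq by (simp add: mult.assoc)
    also have "\<dots> = prod g A'" using less.prems(3) x by simp
    finally have 1: "prod g A = prod g A'" .
    have "{y\<in>A'. f y = y} = {y\<in>A. f y = y}" unfolding A'_def using x fx by auto
    then show ?thesis using IH 1 by simp
  qed
qed

lemma two_ne_zero_ff:
  assumes "odd (card (UNIV::'a::{finite,field} set))"
  shows "(2::'a) \<noteq> 0"
proof
  assume h: "(2::'a) = 0"
  have h': "(1::'a) + 1 = 0" using h by (simp add: one_add_one)
  have "prod (\<lambda>_. (-1::int)) (UNIV::'a set) = prod (\<lambda>_. -1) {x::'a\<in>UNIV. x + 1 = x}"
    by (rule prod_involution) (use h in \<open>auto simp: add.assoc\<close>)
  also have "{x::'a\<in>UNIV. x + 1 = x} = {}" by auto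
  finally have "(-1::int) ^ card (UNIV::'a set) = 1" by simp
  with assms show False by simp
qed

lemma fermat_ff:
  fixes x :: "'a::{finite,field}"
  assumes "x \<noteq> 0"
  shows "x ^ (card (UNIV::'a set) - 1) = 1"
proof -
  let ?U = "UNIV - {0::'a}"
  have "prod (\<lambda>y. x * y) ?U = prod id ?U"
    using assms by (intro prod.reindex_bij_witness[where i="\<lambda>y. y / x" and j="\<lambda>y. x * y"]) auto
  then have "x ^ card ?U * prod id ?U = prod id ?U" by (simp add: prod.distrib)
  moreover have "prod id ?U \<noteq> 0" by simp
  ultimately have "x ^ card ?U = 1" by simp
  moreover have "card ?U = card (UNIV::'a set) - 1" by (simp add: card_Diff_singleton)
  ultimately show ?thesis by metis
qed



lemma card_squares:
  assumes two: "(2::'a::{finite,field}) \<noteq> 0"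
  shows "card (UNIV::'a set) = 2 * card {x::'a. x \<noteq> 0 \<and> is_square x} + 1"
proof -
  let ?Q = "{x::'a. x \<noteq> 0 \<and> is_square x}"
  have U: "UNIV - {0::'a} = (\<Union>s\<in>?Q. {r. r^2 = s})"
    by (auto simp: is_square_def)
  have fib: "card {r::'a. r^2 = s} = 2" if "s \<in> ?Q" for s
  proof -
    from that obtain r where r: "s = r^2" "r \<noteq> 0" by (auto simp: is_square_def)
    have "{x::'a. x^2 = s} = {r, -r}"
    proof -
      have "x^2 = r^2 \<longleftrightarrow> x = r \<or> x = -r" for x :: 'a
        by (metis power2_eq_iff)
      then show ?thesis using r by auto
    qed
    moreover have "r \<noteq> -r"
    proof
      assume h: "r = -r"
      have "r + r = 0" by (subst (2) h) simp
      then have "2 * r = 0" by (simp only: mult_2)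
      with two r show False by simp
    qed
    ultimately show ?thesis by simp
  qed
  have "card (UNIV - {0::'a}) = (\<Sum>s\<in>?Q. card {r::'a. r^2 = s})"
    unfolding U by (rule card_UN_disjoint) auto
  also have "\<dots> = (\<Sum>s\<in>?Q. 2)" using fib by (intro sum.cong) auto
  also have "\<dots> = 2 * card ?Q" by simp
  finally have "card (UNIV - {0::'a}) = 2 * card ?Q" .
  moreover have "card (UNIV - {0::'a}) = card (UNIV::'a set) - 1" by (simp add: card_Diff_singleton)
  moreover have "card (UNIV::'a set) \<ge> 1" by (simp add: Suc_leI finite_UNIV_card_ge_0)
  ultimately show ?thesis by linarith
qed

lemma card_nonsquares:
  assumes two: "(2::'a::{finite,field}) \<noteq> 0"
  shows "card {x::'a. \<not> is_square x} = card {x::'a. x \<noteq> 0 \<and> is_square x}"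
proof -
  let ?Q = "{x::'a. x \<noteq> 0 \<and> is_square x}" and ?N = "{x::'a. \<not> is_square x}"
  have sq0: "is_square (0::'a)" by (auto simp: is_square_def)
  have "UNIV = insert 0 (?Q \<union> ?N)" by auto
  then have "card (UNIV::'a set) = card (insert 0 (?Q \<union> ?N))" by simp
  also have "\<dots> = Suc (card ?Q + card ?N)"
    using sq0 by (subst card_insert_disjoint) (auto intro: card_Un_disjoint)
  finally show ?thesis using card_squares[OF two] by simp
qed

lemma euler_ff:
  assumes two: "(2::'a::{finite,field}) \<noteq> 0"
    and m: "m = card {x::'a. x \<noteq> 0 \<and> is_square x}"
    and c: "(c::'a) \<noteq> 0"
  shows "(is_square c \<longrightarrow> c ^ m = 1) \<and> (\<not> is_square c \<longrightarrow> c ^ m = -1)"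
proof -
  let ?Q = "{x::'a. x \<noteq> 0 \<and> is_square x}"
  have q: "card (UNIV::'a set) - 1 = 2 * m" using card_squares[OF two] m by simp
  have sqQ: "s ^ m = 1" if "s \<noteq> 0" "is_square s" for s :: 'a
  proof -
    from that obtain r where r: "s = r^2" by (auto simp: is_square_def)
    then have "r \<noteq> 0" using that by auto
    then have "r ^ (2*m) = 1" using fermat_ff[of r] q by simp
    then show ?thesis using r by (simp add: power_mult)
  qed
  have cm: "c ^ m = 1 \<or> c ^ m = -1"
  proof -
    have "(c^m)^2 = 1" using fermat_ff[of c] c q by (simp add: power_mult[symmetric] mult.commute)
    then have "(c^m - 1) * (c^m + 1) = 0" by (simp add: algebra_simps power2_eq_square)
    then have "c^m - 1 = 0 \<or> c^m + 1 = 0" by simp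
    then show ?thesis by (auto simp: eq_neg_iff_add_eq_0)
  qed
  have "c ^ m \<noteq> 1" if ns: "\<not> is_square c"
  proof
    assume c1: "c ^ m = 1"
    define p :: "'a poly" where "p = monom 1 m - 1"
    have pz: "poly p x = 0 \<longleftrightarrow> x ^ m = 1" for x by (simp add: p_def poly_monom)
    have mpos: "m > 0"
    proof (rule ccontr)
      assume "\<not> m > 0"
      then have "m = 0" by simp
      then have "card (UNIV::'a set) = 1" using card_squares[OF two] m by simp
      moreover have "card {0::'a, 1} = 2" by simp
      moreover have "card {0::'a, 1} \<le> card (UNIV::'a set)" by (rule card_mono) auto
      ultimately show False by simp
    qed
    have pne: "p \<noteq> 0"
    proof
      assume "p = 0"
      then have "poly p 0 = 0" by simp
      then show False using pz[of 0] mpos by (simp add: power_0_left)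
    qed
    have dp: "degree p \<le> m" unfolding p_def
      by (rule order.trans[OF degree_diff_le_max]) (auto simp: degree_monom_le)
    have "insert c ?Q \<subseteq> {x. poly p x = 0}" using c1 sqQ pz by auto
    then have "card (insert c ?Q) \<le> card {x. poly p x = 0}"
      by (intro card_mono poly_roots_finite pne)
    also have "\<dots> \<le> m" using card_poly_roots_bound[OF pne] dp by simp
    finally have "card (insert c ?Q) \<le> m" .
    moreover have "card (insert c ?Q) = Suc m" using ns m by simp
    ultimately show False by simp
  qed
  then show ?thesis using sqQ[OF c] cm by auto
qed



lemma m_pos:
  assumes two: "(2::'a::{finite,field}) \<noteq> 0"
    and m: "m = card {x::'a. x \<noteq> 0 \<and> is_square x}"
  shows "m > 0"
proof (rule ccontr)
  assume "\<not> m > 0"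
  then have "m = 0" by simp
  then have "card (UNIV::'a set) = 1" using card_squares[OF two] m by simp
  moreover have "card {0::'a, 1} = 2" by simp
  moreover have "card {0::'a, 1} \<le> card (UNIV::'a set)" by (rule card_mono) auto
  ultimately show False by simp
qed

lemma sq_iff_pow:
  assumes two: "(2::'a::{finite,field}) \<noteq> 0"
    and m: "m = card {x::'a. x \<noteq> 0 \<and> is_square x}"
    and c: "(c::'a) \<noteq> 0"
  shows "c ^ m = (if is_square c then 1 else -1)"
  using euler_ff[OF two m c] by auto

lemma one_ne_neg_one:
  assumes two: "(2::'a::{finite,field}) \<noteq> 0"
  shows "(1::'a) \<noteq> -1"
proof
  assume "(1::'a) = -1"
  then have "(1::'a) + 1 = 0" by (metis add.right_inverse)
  with two show False by (simp add: one_add_one)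
qed

lemma sq_mult:
  assumes two: "(2::'a::{finite,field}) \<noteq> 0"
    and x: "(x::'a) \<noteq> 0" and y: "y \<noteq> 0"
  shows "is_square (x * y) \<longleftrightarrow> (is_square x \<longleftrightarrow> is_square y)"
proof -
  define m where "m = card {x::'a. x \<noteq> 0 \<and> is_square x}"
  have "(x*y)^m = x^m * y^m" by (simp add: power_mult_distrib)
  moreover have "x*y \<noteq> 0" using x y by simp
  ultimately show ?thesis
    using sq_iff_pow[OF two m_def x] sq_iff_pow[OF two m_def y] sq_iff_pow[OF two m_def, of "x*y"]
      one_ne_neg_one[OF two]
    by (auto split: if_splits simp: eq_neg_iff_add_eq_0)
qed

lemma sq_inverse:
  "is_square (inverse (x::'a::field)) \<longleftrightarrow> is_square x"
proof
  assume "is_square (inverse x)"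
  then obtain r where "inverse x = r^2" by (auto simp: is_square_def)
  then have "x = (inverse r)^2" by (metis inverse_inverse_eq power_inverse)
  then show "is_square x" by (auto simp: is_square_def)
next
  assume "is_square x"
  then obtain r where "x = r^2" by (auto simp: is_square_def)
  then have "inverse x = (inverse r)^2" by (simp add: power_inverse)
  then show "is_square (inverse x)" by (auto simp: is_square_def)
qed

lemma sq_4: "is_square (4::'a::field)"
  unfolding is_square_def by (rule exI[of _ 2]) (simp add: power2_eq_square)

lemma sq_pow2: "is_square ((x::'a::field)^2)"
  unfolding is_square_def by blast

lemma prod_nonsq:
  assumes two: "(2::'a::{finite,field}) \<noteq> 0"
    and m: "m = card {x::'a. x \<noteq> 0 \<and> is_square x}"
  shows "(\<Prod>n\<in>{x::'a. \<not> is_square x}. c - n) = c ^ m + 1"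
proof -
  let ?N = "{x::'a. \<not> is_square x}"
  define p where "p = (\<Prod>n\<in>?N. [:-n, 1:])"
  define q :: "'a poly" where "q = monom 1 m + 1"
  have cN: "card ?N = m" using card_nonsquares[OF two] m by simp
  have mpos: "m > 0" using m_pos[OF two m] .
  have dp: "degree p = m" unfolding p_def
    by (subst degree_prod_eq_sum_degree) (auto simp: cN)
  have lp: "lead_coeff p = 1" unfolding p_def by (simp add: lead_coeff_prod)
  have cq: "coeff q m = 1" using mpos unfolding q_def by (simp add: coeff_monom)
  have dq: "degree q \<le> m" unfolding q_def
    by (rule order.trans[OF degree_add_le_max]) (auto simp: degree_monom_le)
  have pe: "poly p x = (\<Prod>n\<in>?N. x - n)" for x unfolding p_def by (simp add: poly_prod)
  have qe: "poly q x = x ^ m + 1" for x unfolding q_def by (simp add: poly_monom)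
  have "p = q"
  proof (rule poly_eqI_degree_lead_coeff[where A="?N" and n=m])
    show "coeff p m = coeff q m" using dp lp cq by simp
    show "m \<le> card ?N" using cN by simp
    show "degree p \<le> m" using dp by simp
    show "degree q \<le> m" by (rule dq)
    fix z assume z: "z \<in> ?N"
    have "poly p z = 0" unfolding pe using z by (auto intro: prod_zero)
    moreover have "z \<noteq> 0" using z sq_pow2[of "0::'a"] by auto
    then have "poly q z = 0" unfolding qe using euler_ff[OF two m, of z] z by simp
    ultimately show "poly p z = poly q z" by simp
  qed
  then show ?thesis using pe qe by metis
qed



lemma four_ne0: "(2::'a::field) \<noteq> 0 \<Longrightarrow> (4::'a) \<noteq> 0"
proof -
  assume h: "(2::'a) \<noteq> 0"
  have e: "(4::'a) = 2 * 2" by simp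
  show ?thesis unfolding e using h by (simp only: mult_eq_0_iff) simp
qed

lemma psi_sq:
  assumes two: "(2::'a::{finite,field}) \<noteq> 0" and a: "(a::'a) \<noteq> 0" "a \<noteq> 4"
  shows "is_square (4 - 16/a) \<longleftrightarrow> (is_square (-1::'a) \<longleftrightarrow> (is_square (4-a) \<longleftrightarrow> is_square a))"
proof -
  have f4: "(4::'a) \<noteq> 0" using four_ne0[OF two] .
  have eq: "4 - 16/a = (-1) * ((4 * (4-a)) * inverse a)"
    using a(1) by (simp add: field_simps)
  have n1: "4 - a \<noteq> 0" using a by simp
  have n2: "4 * (4-a) \<noteq> 0" using f4 n1 by (metis mult_eq_0_iff)
  have n3: "inverse a \<noteq> 0" using a(1) by simp
  have n4: "4 * (4-a) * inverse a \<noteq> 0" using n2 n3 by (metis mult_eq_0_iff)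
  have m1: "(-1::'a) \<noteq> 0" by simp
  have "is_square (4 - 16/a) \<longleftrightarrow> (is_square (-1::'a) \<longleftrightarrow> is_square ((4 * (4-a)) * inverse a))"
    unfolding eq by (rule sq_mult[OF two m1 n4])
  also have "is_square ((4 * (4-a)) * inverse a) \<longleftrightarrow> (is_square (4 * (4-a)) \<longleftrightarrow> is_square (inverse a))"
    by (rule sq_mult[OF two n2 n3])
  also have "is_square (4 * (4-a)) \<longleftrightarrow> (is_square (4::'a) \<longleftrightarrow> is_square (4-a))"
    by (rule sq_mult[OF two f4 n1])
  finally show ?thesis using sq_4[where 'a='a] sq_inverse[of a] by blast
qed

lemma sq16:
  assumes two: "(2::'a::{finite,field}) \<noteq> 0" and a: "(a::'a) \<noteq> 0"
  shows "is_square (16/a) \<longleftrightarrow> is_square a"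
proof -
  have f16: "(16::'a) \<noteq> 0" 
  proof -
    have e: "(16::'a) = 4 * 4" by simp
    show ?thesis unfolding e using four_ne0[OF two] by (simp only: mult_eq_0_iff) simp
  qed
  have s16: "is_square (16::'a)" unfolding is_square_def by (rule exI[of _ 4]) (simp add: power2_eq_square)
  have "is_square (16 * inverse a) \<longleftrightarrow> (is_square (16::'a) \<longleftrightarrow> is_square (inverse a))"
    using a f16 by (intro sq_mult[OF two]) auto
  then show ?thesis using s16 sq_inverse[of a] by (simp add: divide_inverse)
qed



lemma main_S:
  assumes odd: "odd (card (UNIV::'a::{finite,field} set))"
  defines "S \<equiv> {a::'a. a \<noteq> 0 \<and> \<not> is_square a \<and> \<not> is_square (4 - a)}"
  shows "\<Prod>S = 2 \<and> (card (UNIV::'a set) = 4 * card S + 1 \<or> card (UNIV::'a set) + 1 = 4 * card S)"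
proof -
  have two: "(2::'a) \<noteq> 0" by (rule two_ne_zero_ff[OF odd])
  define m where "m = card {x::'a. x \<noteq> 0 \<and> is_square x}"
  have q: "card (UNIV::'a set) = 2 * m + 1" using card_squares[OF two] m_def by simp
  have sq0: "is_square (0::'a)" by (auto simp: is_square_def)
  have s4: "is_square (4::'a)" by (rule sq_4)
  have f4: "(4::'a) \<noteq> 0" by (rule four_ne0[OF two])
  have on: "(1::'a) \<noteq> -1" by (rule one_ne_neg_one[OF two])
  have f16: "(16::'a) \<noteq> 0"
  proof -
    have e: "(16::'a) = 4 * 4" by simp
    show ?thesis unfolding e using f4 by (simp only: mult_eq_0_iff) simp
  qed
  define N where "N = {x::'a. \<not> is_square x}"
  define Q where "Q = {x::'a. x \<noteq> 0 \<and> is_square x}"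
  define Y where "Y = {a::'a. \<not> is_square a \<and> is_square (4 - a)}"
  define R where "R = {a::'a. a \<noteq> 0 \<and> is_square a \<and> \<not> is_square (4 - a)}"
  define P where "P = {a::'a. a \<noteq> 0 \<and> a \<noteq> 4 \<and> is_square a \<and> is_square (4 - a)}"
  have cN: "card N = m" unfolding N_def m_def by (rule card_nonsquares[OF two])
  have cQ: "card Q = m" unfolding Q_def m_def by simp
  have NSY: "N = S \<union> Y" unfolding N_def S_def Y_def using sq0 by auto
  have cSY: "card S + card Y = m"
    using cN unfolding NSY by (subst card_Un_disjoint[symmetric]) (auto simp: S_def Y_def)
  have QRP: "Q = insert 4 (R \<union> P)" unfolding Q_def R_def P_def using s4 f4 sq0 by auto
  have cRP: "card R + card P + 1 = m"
  proof -
    have "4 \<notin> R \<union> P" unfolding R_def P_def using sq0 by auto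
    then have "card Q = Suc (card (R \<union> P))" unfolding QRP by simp
    also have "card (R \<union> P) = card R + card P"
      by (rule card_Un_disjoint) (auto simp: R_def P_def)
    finally show ?thesis using cQ by simp
  qed
  have bYR: "bij_betw (\<lambda>a. 4 - a) Y R"
    by (rule bij_betwI[where g="\<lambda>a. 4 - a"]) (use sq0 s4 in \<open>auto simp: Y_def R_def\<close>)
  have cYR: "card Y = card R" using bij_betw_same_card[OF bYR] .
  have Snz: "a \<noteq> 0" "a \<noteq> 4" if "a \<in> S" for a using that s4 unfolding S_def by auto
  have S0: "0 \<notin> S" unfolding S_def by simp
  have finS: "finite S" by simp
  have sqm1: "is_square (-1::'a) \<longleftrightarrow> even m"
  proof -
    have "(-1::'a)^m = (if is_square (-1::'a) then 1 else -1)"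
      by (rule sq_iff_pow[OF two m_def]) simp
    moreover have "(-1::'a)^m = (if even m then 1 else -1)" by simp
    ultimately show ?thesis using on by (auto split: if_splits)
  qed
  have pS0: "\<Prod>S \<noteq> 0" using S0 finS by simp
  show ?thesis
  proof (cases "even m")
    case True
    then have sm1: "is_square (-1::'a)" using sqm1 by simp
    have bSY: "bij_betw (\<lambda>a. 16 / a) S Y"
    proof (rule bij_betwI[where g="\<lambda>a. 16 / a"])
      show "(\<lambda>a. 16 / a) \<in> S \<rightarrow> Y"
      proof
        fix a assume a: "a \<in> S"
        then have "\<not> is_square a" "\<not> is_square (4 - a)" unfolding S_def by auto
        then show "16 / a \<in> Y" unfolding Y_def
          using sq16[OF two Snz(1)[OF a]] psi_sq[OF two Snz[OF a]] sm1 by auto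
      qed
      show "(\<lambda>a. 16 / a) \<in> Y \<rightarrow> S"
      proof
        fix a assume a: "a \<in> Y"
        then have an: "\<not> is_square a" "is_square (4 - a)" unfolding Y_def by auto
        then have az: "a \<noteq> 0" "a \<noteq> 4" using sq0 s4 by auto
        have "16 / a \<noteq> 0" using az f16 by (simp add: divide_eq_0_iff)
        then show "16 / a \<in> S" unfolding S_def
          using an sq16[OF two az(1)] psi_sq[OF two az] sm1 by auto
      qed
      show "16 / (16 / a) = a" if "a \<in> S" for a :: 'a using f16 by simp
      show "16 / (16 / a) = a" if "a \<in> Y" for a :: 'a using f16 by simp
    qed
    have cS: "2 * card S = m" using cSY cYR bij_betw_same_card[OF bSY] by simp
    have L4: "(\<Prod>n\<in>N. 4 - n) = 2"
    proof -
      have "(\<Prod>n\<in>N. 4 - n) = (4::'a) ^ m + 1" unfolding N_def by (rule prod_nonsq[OF two m_def])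
      moreover have "(4::'a)^m = 1" using sq_iff_pow[OF two m_def f4] s4 by simp
      ultimately show ?thesis by simp
    qed
    have P3: "(\<Prod>a\<in>S. 4 - a) = \<Prod>S"
      by (rule prod.reindex_bij_witness[where i="\<lambda>a. 4 - a" and j="\<lambda>a. 4 - a"])
         (use s4 sq0 in \<open>auto simp: S_def\<close>)
    have P4: "(\<Prod>a\<in>Y. 4 - a) = (\<Prod>a\<in>S. 4 - 16 / a)"
      using prod.reindex_bij_betw[OF bSY, of "\<lambda>a. 4 - a"] by simp
    have P5: "(\<Prod>a\<in>S. 4 - 16 / a) = (-4) ^ card S"
    proof -
      have "(\<Prod>a\<in>S. 4 - 16 / a) = (\<Prod>a\<in>S. (-4) * ((4 - a) * inverse a))"
        using Snz by (intro prod.cong) (auto simp: field_simps)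
      also have "\<dots> = (-4) ^ card S * ((\<Prod>a\<in>S. 4 - a) * (\<Prod>a\<in>S. inverse a))"
        by (simp only: prod.distrib prod_constant)
      also have "(\<Prod>a\<in>S. inverse a) = inverse (\<Prod>S)" using prod_inversef[of "\<lambda>x. x" S] by (simp add: comp_def)
      finally show ?thesis using P3 pS0 by simp
    qed
    have P6: "(-4::'a) ^ card S = 1"
    proof -
      obtain i :: 'a where i: "-1 = i^2" using sm1 by (auto simp: is_square_def)
      have i1: "1 + i \<noteq> 0"
      proof
        assume "1 + i = 0"
        then have "i = -1" by (simp add: add_eq_0_iff)
        then have "i^2 = 1" by simp
        then show False using i on by metis
      qed
      have "(1+i)^2 = 1 + 2*i + i^2" by (simp add: power2_eq_square algebra_simps)
      also have "\<dots> = 2 * i" using i[symmetric] by simp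
      finally have sq1i: "(1 + i)^2 = 2 * i" .
      have "card (UNIV::'a set) - 1 = 2 * m" using q by simp
      then have "(1 + i) ^ (2 * m) = 1" using fermat_ff[OF i1] by metis
      then have "((1 + i)^2) ^ m = 1" by (simp only: power_mult)
      then have A1: "(2 * i) ^ m = 1" by (simp only: sq1i)
      have "i ^ m = (i^2) ^ card S" by (simp only: cS[symmetric] power_mult)
      then have A2: "i ^ m = (-1) ^ card S" using i by simp
      have "(2::'a) ^ m = (2^2) ^ card S" by (simp only: cS[symmetric] power_mult)
      then have A3: "(2::'a) ^ m = 4 ^ card S" by simp
      have "(2 * i) ^ m = 2 ^ m * i ^ m" by (rule power_mult_distrib)
      then have "(4::'a) ^ card S * (-1) ^ card S = 1" using A1 A2 A3 by simp
      then have "((4::'a) * (-1)) ^ card S = 1" by (simp only: power_mult_distrib)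
      then show ?thesis by simp
    qed
    have "(\<Prod>n\<in>N. 4 - n) = (\<Prod>a\<in>S. 4 - a) * (\<Prod>a\<in>Y. 4 - a)"
      unfolding NSY by (rule prod.union_disjoint) (auto simp: S_def Y_def)
    then have "\<Prod>S = 2" using L4 P3 P4 P5 P6 by simp
    moreover have "card (UNIV::'a set) = 4 * card S + 1" using q cS by simp
    ultimately show ?thesis by simp
  next
    case False
    then have sm1: "\<not> is_square (-1::'a)" using sqm1 by simp
    have bRP: "bij_betw (\<lambda>a. 16 / a) R P"
    proof (rule bij_betwI[where g="\<lambda>a. 16 / a"])
      show "(\<lambda>a. 16 / a) \<in> R \<rightarrow> P"
      proof
        fix a assume a: "a \<in> R"
        then have an: "is_square a" "\<not> is_square (4 - a)" "a \<noteq> 0" unfolding R_def by auto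
        then have az: "a \<noteq> 4" using sq0 by auto
        have "16 / a \<noteq> 0" using an f16 by (simp add: divide_eq_0_iff)
        moreover have "16 / a \<noteq> 4"
        proof
          assume "16 / a = 4"
          then have "16 = 4 * a" using an(3) by (simp add: field_simps)
          then have "4 * 4 = 4 * a" by simp
          then have "(4::'a) = a" by (simp only: mult_left_cancel[OF f4])
          then show False using az by simp
        qed
        ultimately show "16 / a \<in> P" unfolding P_def
          using an sq16[OF two an(3)] psi_sq[OF two an(3) az] sm1 by auto
      qed
      show "(\<lambda>a. 16 / a) \<in> P \<rightarrow> R"
      proof
        fix a assume a: "a \<in> P"
        then have an: "is_square a" "is_square (4 - a)" "a \<noteq> 0" "a \<noteq> 4" unfolding P_def by auto
        have "16 / a \<noteq> 0" using an f16 by (simp add: divide_eq_0_iff)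
        then show "16 / a \<in> R" unfolding R_def
          using an sq16[OF two an(3)] psi_sq[OF two an(3) an(4)] sm1 by auto
      qed
      show "16 / (16 / a) = a" if "a \<in> R" for a :: 'a using f16 by simp
      show "16 / (16 / a) = a" if "a \<in> P" for a :: 'a using f16 by simp
    qed
    have cS: "2 * card S = m + 1" using cSY cYR cRP bij_betw_same_card[OF bRP] by simp
    have psiS: "\<forall>a\<in>S. 16 / a \<in> S \<and> 16 / (16 / a) = a"
    proof
      fix a assume a: "a \<in> S"
      then have an: "\<not> is_square a" "\<not> is_square (4 - a)" unfolding S_def by auto
      have "16 / a \<noteq> 0" using Snz[OF a] f16 by (simp add: divide_eq_0_iff)
      then show "16 / a \<in> S \<and> 16 / (16 / a) = a" unfolding S_def
        using an sq16[OF two Snz(1)[OF a]] psi_sq[OF two Snz[OF a]] sm1 f16 by auto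
    qed
    have inv: "\<forall>a\<in>S. 16 / a \<noteq> a \<longrightarrow> a / 4 * (16 / a / 4) = 1"
      using Snz f16 by auto
    have PI: "(\<Prod>a\<in>S. a / 4) = (\<Prod>a\<in>{a\<in>S. 16 / a = a}. a / 4)"
      by (rule prod_involution[OF finS psiS inv])
    have s8: "is_square (8::'a) \<longleftrightarrow> is_square (2::'a)"
    proof -
      have "is_square ((2::'a) * 4) \<longleftrightarrow> (is_square (2::'a) \<longleftrightarrow> is_square (4::'a))"
        by (rule sq_mult[OF two two f4])
      then show ?thesis using s4 by simp
    qed
    have sm4: "\<not> is_square (-4::'a)"
    proof -
      have "is_square ((-1::'a) * 4) \<longleftrightarrow> (is_square (-1::'a) \<longleftrightarrow> is_square (4::'a))"
        by (rule sq_mult[OF two _ f4]) simp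
      then show ?thesis using s4 sm1 by simp
    qed
    have fix_eq: "{a\<in>S. 16 / a = a} = (if is_square (2::'a) then {} else {-4})"
    proof -
      have "16 / a = a \<longleftrightarrow> a = 4 \<or> a = -4" if "a \<noteq> 0" for a :: 'a
      proof -
        have "16 / a = a \<longleftrightarrow> a * a = 4 * 4" using that by (auto simp: field_simps)
        also have "\<dots> \<longleftrightarrow> (a - 4) * (a + 4) = 0" by (simp add: algebra_simps)
        also have "\<dots> \<longleftrightarrow> a = 4 \<or> a = -4" by (simp add: eq_neg_iff_add_eq_0)
        finally show ?thesis .
      qed
      then have "{a\<in>S. 16 / a = a} = {a\<in>S. a = -4}" using Snz by auto
      moreover have "(-4::'a) \<in> S \<longleftrightarrow> \<not> is_square (2::'a)"
        unfolding S_def using sm4 s8 f4 by simp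
      ultimately show ?thesis by auto
    qed
    have "(\<Prod>a\<in>S. a / 4) = \<Prod>S / 4 ^ card S" by (simp add: prod_dividef)
    moreover have "(4::'a) ^ card S = 2 * 2 ^ m"
    proof -
      have "(4::'a) ^ card S = 2 ^ (2 * card S)" by (simp add: power_mult)
      then show ?thesis using cS by simp
    qed
    moreover have "(2::'a) ^ m = (if is_square (2::'a) then 1 else -1)" by (rule sq_iff_pow[OF two m_def two])
    ultimately have "\<Prod>S = 2" using PI fix_eq f4
      by (auto split: if_splits simp: field_simps)
    moreover have "card (UNIV::'a set) + 1 = 4 * card S" using q cS by simp
    ultimately show ?thesis by simp
  qed
qed


lemma mod8_lemma:
  fixes q k :: nat
  assumes "q = 4 * k + 1 \<or> q + 1 = 4 * k"
  shows "(q mod 8 = 1 \<or> q mod 8 = 7 \<longrightarrow> even k) \<and> (q mod 8 = 3 \<or> q mod 8 = 5 \<longrightarrow> odd k)"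
proof (cases "even k")
  case True
  then obtain j where j: "k = 2 * j" by blast
  from assms have "q = 8 * j + 1 \<or> q = 8 * (j - 1) + 7" unfolding j by auto
  then have "q mod 8 = 1 \<or> q mod 8 = 7" by auto
  then show ?thesis using True by auto
next
  case False
  then obtain j where j: "k = 2 * j + 1" using oddE by blast
  from assms have "q = 8 * j + 5 \<or> q = 8 * j + 3" unfolding j by auto
  then have "q mod 8 = 5 \<or> q mod 8 = 3" by auto
  then show ?thesis using False by auto
qed


theorem theorem6p2:
  assumes "odd (card (UNIV :: 'a::{finite,field} set))"
  shows "\<Prod>{a::'a. a \<noteq> 0 \<and> \<not> is_square a \<and> \<not> is_square (4 - a)} = 2
    \<and> (card (UNIV :: 'a set) mod 8 \<in> {1, 7} \<longrightarrow>
         \<Prod>{a::'a. a \<noteq> 0 \<and> \<not> is_square (- a) \<and> \<not> is_square (4 + a)} = 2)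
    \<and> (card (UNIV :: 'a set) mod 8 \<in> {3, 5} \<longrightarrow>
         \<Prod>{a::'a. a \<noteq> 0 \<and> \<not> is_square (- a) \<and> \<not> is_square (4 + a)} = - 2)"
proof -
  define S where "S = {a::'a. a \<noteq> 0 \<and> \<not> is_square a \<and> \<not> is_square (4 - a)}"
  define S2 where "S2 = {a::'a. a \<noteq> 0 \<and> \<not> is_square (- a) \<and> \<not> is_square (4 + a)}"
  define q where "q = card (UNIV :: 'a set)"
  define k where "k = card S"
  have M: "\<Prod>S = 2 \<and> (q = 4 * k + 1 \<or> q + 1 = 4 * k)"
    using main_S[OF assms] unfolding S_def q_def k_def by blast
  have "(\<Prod>a\<in>S. - a) = \<Prod>S2"
    by (rule prod.reindex_bij_witness[where i=uminus and j=uminus]) (auto simp: S_def S2_def)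
  moreover have "(\<Prod>a\<in>S. - a) = (\<Prod>a\<in>S. (-1) * a)" by simp
  moreover have "(\<Prod>a\<in>S. (-1) * a) = (-1) ^ card S * \<Prod>S"
    by (simp only: prod.distrib prod_constant)
  ultimately have "\<Prod>S2 = (-1) ^ card S * \<Prod>S" by metis
  then have P2: "\<Prod>S2 = (-1) ^ k * 2" using M unfolding k_def by metis
  have e12: "(q mod 8 = 1 \<or> q mod 8 = 7 \<longrightarrow> even k) \<and> (q mod 8 = 3 \<or> q mod 8 = 5 \<longrightarrow> odd k)"
    using M by (intro mod8_lemma) blast
  then have e1: "q mod 8 \<in> {1, 7} \<Longrightarrow> even k" and e2: "q mod 8 \<in> {3, 5} \<Longrightarrow> odd k" by auto
  show ?thesis
    using M P2 e1 e2 unfolding S_def[symmetric] S2_def[symmetric] q_def[symmetric] by auto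
qed

end
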